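(* Let $\{M_j\}$ be a collection of hermitian $n\times n$ matrices. If a nontrivial subspace $V\subset\mathbb{C}^n$ is minimal with respect to $\mathrm{Span}_{\mathbb{R}}\{M_j\}$, then no real linear combination of $\{M_j\}$ is positive semi-definite on $V$ unless its restriction to $V$ is zero.
   Context: For a hermitian $n\times n$ matrix $M$ and a subspace $V\subset\mathbb{C}^n$, the restriction of $M$ to $V$ is the restriction of the quadratic form $v\mapsto\bar v^TMv$ to $V$. $\mathrm{Span}_{\mathbb{R}}\{M_j\}$ is indefinite on a nontrivial subspace $V$ if no real linear combination of the $M_j$ is positive definite when restricted to $V$. A nontrivial subspace $V$ is minimal with respect to $\mathrm{Span}_{\mathbb{R}}\{M_j\}$ if $\mathrm{Span}_{\mathbb{R}}\{M_j\}$ is indefinite on $V$ but not indefinite on any nontrivial proper subspace of $V$. *)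

theory Defs
  imports "HOL-Analysis.Analysis"
begin

definition hermitian :: "complex^'n^'n \<Rightarrow> bool" where
  "hermitian M \<longleftrightarrow> (\<forall>i j. M $ i $ j = cnj (M $ j $ i))"

definition qform :: "complex^'n^'n \<Rightarrow> complex^'n \<Rightarrow> complex" where
  "qform M v = (\<Sum>i\<in>UNIV. cnj (v $ i) * (M *v v) $ i)"

definition csubspace :: "(complex^'n) set \<Rightarrow> bool" where
  "csubspace V \<longleftrightarrow> 0 \<in> V \<and> (\<forall>x\<in>V. \<forall>y\<in>V. x + y \<in> V) \<and> (\<forall>c. \<forall>x\<in>V. c *s x \<in> V)"

definition pos_def_on :: "complex^'n^'n \<Rightarrow> (complex^'n) set \<Rightarrow> bool" where
  "pos_def_on M V \<longleftrightarrow> (\<forall>v\<in>V. v \<noteq> 0 \<longrightarrow> Re (qform M v) > 0)"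

text \<open>Span_R S is indefinite on V: no real linear combination (element of the real span) is
  positive definite on V.  Note: complex^'n^'n is a real vector space, so span is the real span.\<close>
definition indefinite_on :: "(complex^'n^'n) set \<Rightarrow> (complex^'n) set \<Rightarrow> bool" where
  "indefinite_on S V \<longleftrightarrow> \<not> (\<exists>N\<in>span S. pos_def_on N V)"

definition minimal_wrt :: "(complex^'n^'n) set \<Rightarrow> (complex^'n) set \<Rightarrow> bool" where
  "minimal_wrt S V \<longleftrightarrow> csubspace V \<and> V \<noteq> {0} \<and> indefinite_on S V \<and>
     (\<forall>W. csubspace W \<and> W \<noteq> {0} \<and> W \<subset> V \<longrightarrow> \<not> indefinite_on S W)"

end

theory Submission imports Defs begin

lemma qform_expand: "qform M v = (\<Sum>i\<in>UNIV. \<Sum>j\<in>UNIV. cnj (v $ i) * M $ i $ j * v $ j)"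
  unfolding qform_def matrix_vector_mult_def by (simp add: sum_distrib_left mult.assoc)

lemma qform_add_mat: "qform (A + B) v = qform A v + qform B v"
  unfolding qform_expand by (simp add: distrib_left distrib_right sum.distrib)

lemma scaleR_comp2: "(r *\<^sub>R A) $ i $ j = of_real r * (A $ i $ j :: complex)"
  by (metis vector_scaleR_component scaleR_conv_of_real)

lemma scaleR_comp1: "(r *\<^sub>R v) $ i = of_real r * (v $ i :: complex)"
  by (metis vector_scaleR_component scaleR_conv_of_real)

lemma qform_scaleR_mat: "qform (r *\<^sub>R A) v = of_real r * qform A v"
  unfolding qform_expand by (simp only: scaleR_comp2) (simp add: sum_distrib_left mult_ac)

lemma qform_zero_mat: "qform 0 v = 0"
  unfolding qform_expand by simp

lemma qform_scale_vec: "qform M (c *s v) = (cnj c * c) * qform M v"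
  unfolding qform_expand by (simp add: sum_distrib_left mult_ac)

lemma qform_scaleR_vec: "qform M (r *\<^sub>R v) = of_real (r^2) * qform M v"
  unfolding qform_expand by (simp only: scaleR_comp1) (simp add: sum_distrib_left mult_ac power2_eq_square)

lemma qform_par: "qform M (v + w) + qform M (v - w) = 2 * qform M v + 2 * qform M w"
  unfolding qform_expand
  by (simp add: sum_distrib_left sum.distrib[symmetric] algebra_simps)

lemma qform_cont: "continuous_on UNIV (\<lambda>v. Re (qform M v))"
  unfolding qform_expand by (intro continuous_intros)

lemma herm_real: "hermitian M \<Longrightarrow> Im (qform M v) = 0"
proof -
  assume h: "hermitian M"
  have "cnj (qform M v) = qform M v"
    unfolding qform_expand
    apply (simp add: cnj_sum)
    apply (subst sum.swap)
    apply (rule sum.cong, simp)+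
    using h unfolding hermitian_def by (metis mult.commute mult.assoc complex_cnj_cnj)
  then show ?thesis by (metis cnj.simps(2) complex_cnj_cancel_iff  neg_equal_zero)
qed

lemma span_real:
  assumes "\<forall>M\<in>S. hermitian M" "N \<in> span S"
  shows "Im (qform N v) = 0"
  using assms(2)
proof (induction rule: span_induct)
  case base
  then show ?case using assms(1) herm_real
    by (auto simp: real_vector.subspace_def qform_zero_mat qform_add_mat qform_scaleR_mat)
next
  case step
  then show ?case using assms(1) herm_real
    by (auto simp: real_vector.subspace_def qform_zero_mat qform_add_mat qform_scaleR_mat)
qed

lemma scaleR_smult: "r *\<^sub>R x = (of_real r) *s (x::complex^'n)"
  by (simp add: vec_eq_iff) (simp add: scaleR_conv_of_real)

lemma qform_zero_vec: "qform M 0 = 0"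
  by (simp add: qform_def)

lemma csub_subspace: "csubspace V \<Longrightarrow> subspace V"
  unfolding csubspace_def real_vector.subspace_def
  by (simp add: scaleR_smult)


lemma K_csub:
  assumes V: "csubspace V" and psd: "\<forall>v\<in>V. Re (qform N v) \<ge> 0"
  shows "csubspace {v\<in>V. Re (qform N v) = 0}"
proof -
  have add: "v + w \<in> V \<and> Re (qform N (v + w)) = 0"
    if "v \<in> V" "w \<in> V" "Re (qform N v) = 0" "Re (qform N w) = 0" for v w
  proof -
    have vw: "v + w \<in> V" using V that unfolding csubspace_def by blast
    have "(-1) *s w \<in> V" using V that unfolding csubspace_def by blast
    moreover have "(-1) *s w = - w" by (simp add: vec_eq_iff)
    ultimately have "v - w \<in> V" using V that unfolding csubspace_def by (metis diff_conv_add_uminus)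
    then have "Re (qform N (v - w)) \<ge> 0" "Re (qform N (v + w)) \<ge> 0" using psd vw by auto
    moreover have "Re (qform N (v + w)) + Re (qform N (v - w)) = 0"
      using arg_cong[OF qform_par[of N v w], of Re] that by simp
    ultimately show ?thesis using vw by linarith
  qed
  have sc: "c *s v \<in> V \<and> Re (qform N (c *s v)) = 0"
    if "v \<in> V" "Re (qform N v) = 0" for c v
  proof -
    have "cnj c * c = of_real ((Re c)\<^sup>2 + (Im c)\<^sup>2)" by (metis complex_mult_cnj mult.commute)
    then show ?thesis using V that unfolding csubspace_def
      by (simp add: qform_scale_vec)
  qed
  show ?thesis using V add sc unfolding csubspace_def by (auto simp: qform_zero_vec)
qed

theorem mainTheorem7:
  fixes S :: "(complex^'n^'n) set" and V :: "(complex^'n) set" and N :: "complex^'n^'n"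
  assumes herm: "\<forall>M\<in>S. hermitian M"
    and min: "minimal_wrt S V"
    and N: "N \<in> span S"
    and psd: "\<forall>v\<in>V. Re (qform N v) \<ge> 0"
  shows "\<forall>v\<in>V. qform N v = 0"
proof (rule ccontr)
  assume "\<not> ?thesis"
  then obtain v0 where v0: "v0 \<in> V" "qform N v0 \<noteq> 0" by blast
  have im: "\<And>v. Im (qform N v) = 0" using span_real[OF herm N] .
  have v0K: "Re (qform N v0) \<noteq> 0" using v0(2) im complex_eq_iff by (metis zero_complex.sel)
  have Vc: "csubspace V" and V0: "V \<noteq> {0}" and ind: "indefinite_on S V"
    and minW: "\<And>W. csubspace W \<Longrightarrow> W \<noteq> {0} \<Longrightarrow> W \<subset> V \<Longrightarrow> \<not> indefinite_on S W"
    using min unfolding minimal_wrt_def by auto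
  define K where "K = {v\<in>V. Re (qform N v) = 0}"
  have Kc: "csubspace K" unfolding K_def using K_csub[OF Vc psd] .
  have KV: "K \<subset> V" using v0 v0K unfolding K_def by auto
  show False
  proof (cases "K = {0}")
    case True
    have "pos_def_on N V" unfolding pos_def_on_def
    proof (intro ballI impI)
      fix v assume "v \<in> V" "v \<noteq> 0"
      then have "v \<notin> K" using True by auto
      then show "Re (qform N v) > 0" using psd \<open>v \<in> V\<close> unfolding K_def by force
    qed
    then show False using ind N unfolding indefinite_on_def by blast
  next
    case False
    then obtain N' where N': "N' \<in> span S" "pos_def_on N' K"
      using minW[OF Kc False KV] unfolding indefinite_on_def by blast
    define h where "h = (\<lambda>v. Re (qform N' v))"
    define g where "g = (\<lambda>v. Re (qform N v))"
    define C where "C = V \<inter> sphere 0 1"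
    have hc: "continuous_on A h" for A unfolding h_def using qform_cont continuous_on_subset by blast
    have gc: "continuous_on A g" for A unfolding g_def using qform_cont continuous_on_subset by blast
    have cC: "compact C" unfolding C_def
      by (intro closed_Int_compact closed_subspace csub_subspace Vc compact_sphere)
    obtain w where w: "w \<in> V" "w \<noteq> 0" using V0 Vc unfolding csubspace_def by blast
    have "(1 / norm w) *\<^sub>R w \<in> C"
      using csub_subspace[OF Vc] w unfolding C_def by (simp add: subspace_scale)
    then have "C \<noteq> {}" by blast
    then obtain x0 where x0: "x0 \<in> C" "\<forall>y\<in>C. h x0 \<le> h y"
      using continuous_attains_inf[OF cC _ hc] by blast
    define B where "B = \<bar>h x0\<bar>"
    have B: "\<forall>y\<in>C. - B \<le> h y" using x0 unfolding B_def by force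
    define C' where "C' = C \<inter> {v. h v \<le> 0}"
    have "closed {v. h v \<le> 0}" by (rule closed_Collect_le[OF hc continuous_on_const])
    then have cC': "compact C'" unfolding C'_def using compact_Int_closed[OF cC] by blast
    obtain m where m: "m > 0" "\<forall>v\<in>C'. m \<le> g v"
    proof (cases "C' = {}")
      case True then show ?thesis using that[of 1] by auto
    next
      case False
      then obtain y0 where y0: "y0 \<in> C'" "\<forall>y\<in>C'. g y0 \<le> g y"
        using continuous_attains_inf[OF cC' _ gc] by blast
      have "g y0 > 0"
      proof (rule ccontr)
        assume "\<not> g y0 > 0"
        moreover have "g y0 \<ge> 0" using y0 psd unfolding C'_def C_def g_def by auto
        ultimately have "y0 \<in> K" using y0 unfolding K_def C'_def C_def g_def by auto
        moreover have "y0 \<noteq> 0" using y0 unfolding C'_def C_def by auto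
        ultimately have "h y0 > 0" using N' unfolding pos_def_on_def h_def by auto
        then show False using y0 unfolding C'_def by auto
      qed
      then show ?thesis using that y0 by auto
    qed
    define t where "t = (B + 1) / m"
    have t0: "t \<ge> 0" using m unfolding t_def B_def by auto
    have pos: "h v + t * g v > 0" if "v \<in> C" for v
    proof (cases "h v \<le> 0")
      case True
      then have "g v \<ge> m" using m that unfolding C'_def by auto
      then have "t * g v \<ge> t * m" using t0 by (simp add: mult_left_mono)
      also have "t * m = B + 1" using m unfolding t_def by simp
      finally show ?thesis using B that by force
    next
      case False
      have "g v \<ge> 0" using psd that unfolding C_def g_def by auto
      then show ?thesis using False t0 by (simp add: add_pos_nonneg)
    qed
    have "pos_def_on (N' + t *\<^sub>R N) V" unfolding pos_def_on_def
    proof (intro ballI impI)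
      fix v assume v: "v \<in> V" "v \<noteq> 0"
      define u where "u = (1 / norm v) *\<^sub>R v"
      have uC: "u \<in> C" using csub_subspace[OF Vc] v unfolding C_def u_def by (simp add: subspace_scale)
      have vu: "v = norm v *\<^sub>R u" using v unfolding u_def by simp
      have "Re (qform (N' + t *\<^sub>R N) v) = (norm v)^2 * (h u + t * g u)"
        apply (subst vu)
        by (simp add: qform_scaleR_vec qform_add_mat qform_scaleR_mat h_def g_def algebra_simps)
      also have "\<dots> > 0" using pos[OF uC] v by simp
      finally show "Re (qform (N' + t *\<^sub>R N) v) > 0" .
    qed
    moreover have "N' + t *\<^sub>R N \<in> span S" using N N' by (simp add: span_add span_scale)
    ultimately show False using ind unfolding indefinite_on_def by blast
  qed
qed

end
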